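(* Let $p$ be an odd prime, $\omega=e^{2\pi i/p}$, $m\ge1$, $Q=T_{(p^m)}$ and $K=K_Q(p)$. Let $M=S_\xi X^b$ and $M'=S_{\xi'}X^{b'}$ be elements of $K$ (with $S_\xi,S_{\xi'}\in Q$, $b,b'\in\mathbb{Z}_p$) such that $[M,M']=\omega^c\mathbbm{1}$ for some $c\in\mathbb{Z}_p$. Then: (1) if $b=b'=0$, then $M,M'\in Q$ and $c=0$; (2) if $b\neq0$ and $b'=0$, then $M'\in T_{(p)}$, and if moreover $c=0$ then $M'\in Z(K)$; (3) if $b\neq0$ and $b'\neq0$, then there exist $a,y\in\mathbb{Z}_p$ and $S_\chi\in T_{(p)}$ such that $\omega^aM'=(MS_\chi)^y$, where $\chi(q)=\omega^{c'q}$ with $c'\in\mathbb{Z}_p$ satisfying $b'c'=-c$, and $yb=b'$; if moreover $c=0$, then $\omega^aM'=M^y$.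
   Context: Let $\{|q\rangle:q\in\mathbb{Z}_p\}$ be the computational basis of $\mathbb{C}^p$ and $X|q\rangle=|q+1\rangle$. For $\xi:\mathbb{Z}_p\to U(1)$ let $S_\xi=\mathrm{diag}(\xi(0),\dots,\xi(p-1))$. $T=\{S_\xi:\prod_{q}\xi(q)=1\}$ and $T_{(p^k)}=\{S\in T:S^{p^k}=\mathbbm{1}\}$. $K_Q(p)$ is the subgroup of $SU(p)$ generated by all $S_\xi X^b$ with $S_\xi\in Q$, $b\in\mathbb{Z}_p$. $Z(K)$ denotes the center of $K$. The commutator is $[A,B]=ABA^{-1}B^{-1}$. *)

theory Defs
  imports Complex_Main "Jordan_Normal_Form.Matrix"
begin

text \<open>Computational basis of C^p indexed by 0..p-1 (= Z_p). Shift X|q> = |q+1 mod p>.\<close>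
definition Xsh :: "nat \<Rightarrow> complex mat" where
  "Xsh p = mat p p (\<lambda>(i,j). if i = (j + 1) mod p then 1 else 0)"

definition Sdiag :: "nat \<Rightarrow> (nat \<Rightarrow> complex) \<Rightarrow> complex mat" where
  "Sdiag p \<xi> = mat p p (\<lambda>(i,j). if i = j then \<xi> i else 0)"

definition Tgrp :: "nat \<Rightarrow> complex mat set" where
  "Tgrp p = {Sdiag p \<xi> | \<xi>. (\<forall>q<p. cmod (\<xi> q) = 1) \<and> (\<Prod>q<p. \<xi> q) = 1}"

definition Tpow :: "nat \<Rightarrow> nat \<Rightarrow> complex mat set" where
  "Tpow p k = {S \<in> Tgrp p. S ^\<^sub>m (p ^ k) = 1\<^sub>m p}"

definition minv :: "complex mat \<Rightarrow> complex mat" where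
  "minv A = (THE B. B \<in> carrier_mat (dim_row A) (dim_row A) \<and> A * B = 1\<^sub>m (dim_row A)
                  \<and> B * A = 1\<^sub>m (dim_row A))"

definition comm :: "complex mat \<Rightarrow> complex mat \<Rightarrow> complex mat" where
  "comm A B = A * B * minv A * minv B"

inductive_set gen_grp :: "nat \<Rightarrow> complex mat set \<Rightarrow> complex mat set" for p G where
  gen: "A \<in> G \<Longrightarrow> A \<in> gen_grp p G"
| one: "1\<^sub>m p \<in> gen_grp p G"
| mult: "A \<in> gen_grp p G \<Longrightarrow> B \<in> gen_grp p G \<Longrightarrow> A * B \<in> gen_grp p G"
| inv: "A \<in> gen_grp p G \<Longrightarrow> minv A \<in> gen_grp p G"

definition KQ :: "nat \<Rightarrow> complex mat set \<Rightarrow> complex mat set" where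
  "KQ p Q = gen_grp p {S * (Xsh p ^\<^sub>m b) | S b. S \<in> Q \<and> b < p}"

definition center :: "complex mat set \<Rightarrow> complex mat set" where
  "center K = {A \<in> K. \<forall>B \<in> K. A * B = B * A}"

end

theory Submission imports Defs "HOL-Number_Theory.Cong" begin

definition Mc :: "nat \<Rightarrow> (nat \<Rightarrow> complex) \<Rightarrow> nat \<Rightarrow> complex mat" where
  "Mc p f b = mat p p (\<lambda>(i,j). if i = (j + b) mod p then f j else 0)"

lemma Mc_carrier[simp]: "Mc p f b \<in> carrier_mat p p" by (simp add: Mc_def)
lemma Mc_dims[simp]: "dim_row (Mc p f b) = p" "dim_col (Mc p f b) = p" by (simp_all add: Mc_def)
lemma Mc_index: "i < p \<Longrightarrow> j < p \<Longrightarrow> Mc p f b $$ (i,j) = (if i = (j + b) mod p then f j else 0)"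
  by (simp add: Mc_def)

lemma Mc_mult:
  assumes "p > 0"
  shows "Mc p f b * Mc p g d = Mc p (\<lambda>j. f ((j + d) mod p) * g j) (b + d)"
proof (rule eq_matI)
  fix i j assume i: "i < dim_row (Mc p (\<lambda>j. f ((j + d) mod p) * g j) (b + d))"
    and j: "j < dim_col (Mc p (\<lambda>j. f ((j + d) mod p) * g j) (b + d))"
  hence ip: "i < p" and jp: "j < p" by auto
  let ?k = "(j + d) mod p"
  have kp: "?k \<in> {0..<p}" using assms by auto
  have "(Mc p f b * Mc p g d) $$ (i,j) = (\<Sum>k\<in>{0..<p}. Mc p f b $$ (i,k) * Mc p g d $$ (k,j))"
    using ip jp by (simp add: scalar_prod_def)
  also have "\<dots> = (\<Sum>k\<in>{0..<p}. if k = ?k then (if i = (k + b) mod p then f k else 0) * g j else 0)"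
    using ip jp by (intro sum.cong) (auto simp: Mc_index)
  also have "\<dots> = (if i = (?k + b) mod p then f ?k else 0) * g j"
    using kp by (simp add: sum.delta)
  also have "(?k + b) mod p = (j + (b + d)) mod p" by (metis add.assoc add.commute mod_add_left_eq)
  finally show "(Mc p f b * Mc p g d) $$ (i,j) = Mc p (\<lambda>j. f ((j + d) mod p) * g j) (b + d) $$ (i,j)"
    using ip jp by (simp add: Mc_index)
qed auto

lemma Mc_cong: "(\<And>j. j < p \<Longrightarrow> f j = g j) \<Longrightarrow> b mod p = d mod p \<Longrightarrow> Mc p f b = Mc p g d"
  unfolding Mc_def by (intro eq_matI) (auto simp: mod_add_right_eq[symmetric, of _ b] mod_add_right_eq[symmetric, of _ d])

lemma Mc_eqD: assumes "Mc p f b = Mc p g b" "j < p" shows "f j = g j"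
proof -
  have "(j + b) mod p < p" using assms(2) by auto
  hence "Mc p f b $$ ((j + b) mod p, j) = Mc p g b $$ ((j + b) mod p, j)" using assms by simp
  thus ?thesis using assms(2) \<open>(j + b) mod p < p\<close> by (simp add: Mc_index)
qed

lemma Mc_smult: "a \<cdot>\<^sub>m Mc p f b = Mc p (\<lambda>j. a * f j) b"
  unfolding Mc_def by (intro eq_matI) auto

lemma Sdiag_Mc: "Sdiag p f = Mc p f 0"
  unfolding Mc_def Sdiag_def by (intro eq_matI) auto

lemma one_Mc: "1\<^sub>m p = Mc p (\<lambda>_. 1) 0"
  unfolding Mc_def by (intro eq_matI) auto

lemma Xsh_Mc: "Xsh p = Mc p (\<lambda>_. 1) 1"
  unfolding Mc_def Xsh_def by (intro eq_matI) auto

lemma Xpow_Mc: assumes "p > 0" shows "Xsh p ^\<^sub>m b = Mc p (\<lambda>_. 1) b"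
proof (induction b)
  case 0 show ?case by (simp add: Xsh_def one_Mc)
next
  case (Suc b) thus ?case using assms by (simp add: Xsh_Mc Mc_mult)
qed

lemma SX_Mc: assumes "p > 0" shows "Sdiag p \<xi> * Xsh p ^\<^sub>m b = Mc p (\<lambda>j. \<xi> ((j + b) mod p)) b"
  using assms by (simp add: Sdiag_Mc Xpow_Mc Mc_mult)


lemma minv_eq:
  assumes A: "A \<in> carrier_mat n n" and B: "B \<in> carrier_mat n n" and AB: "A * B = 1\<^sub>m n" and BA: "B * A = 1\<^sub>m n"
  shows "minv A = B"
proof -
  have dr: "dim_row A = n" using A by auto
  show ?thesis unfolding minv_def dr
  proof (rule the_equality)
    show "B \<in> carrier_mat n n \<and> A * B = 1\<^sub>m n \<and> B * A = 1\<^sub>m n" using B AB BA by auto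
  next
    fix C assume C0: "C \<in> carrier_mat n n \<and> A * C = 1\<^sub>m n \<and> C * A = 1\<^sub>m n"
    hence C: "C \<in> carrier_mat n n" "A * C = 1\<^sub>m n" "C * A = 1\<^sub>m n" by auto
    have "C = C * 1\<^sub>m n" using right_mult_one_mat[OF C(1)] by (rule sym)
    also have "\<dots> = C * (A * B)" by (simp only: AB)
    also have "\<dots> = (C * A) * B" by (rule assoc_mult_mat[OF C(1) A B, symmetric])
    also have "\<dots> = B" by (simp only: C(3) left_mult_one_mat[OF B])
    finally show "C = B" .
  qed
qed

definition invs :: "nat \<Rightarrow> complex mat set" where
  "invs n = {A \<in> carrier_mat n n. \<exists>B \<in> carrier_mat n n. A * B = 1\<^sub>m n \<and> B * A = 1\<^sub>m n}"

lemma gen_grp_invs: assumes "A \<in> gen_grp p G" "G \<subseteq> invs p" shows "A \<in> invs p"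
  using assms(1)
proof induction
  case (gen A) thus ?case using assms(2) by auto
next
  case one thus ?case unfolding invs_def by (intro CollectI conjI bexI[of _ "1\<^sub>m p"]) auto
next
  case (mult A B)
  then obtain A' B' where A: "A \<in> carrier_mat p p" "A' \<in> carrier_mat p p" "A * A' = 1\<^sub>m p" "A' * A = 1\<^sub>m p"
    and B: "B \<in> carrier_mat p p" "B' \<in> carrier_mat p p" "B * B' = 1\<^sub>m p" "B' * B = 1\<^sub>m p"
    unfolding invs_def by auto
  have e: "B * (B' * A') = A'" using assoc_mult_mat[OF B(1) B(2) A(2)] B(3) left_mult_one_mat[OF A(2)] by simp
  have 1: "A * B * (B' * A') = 1\<^sub>m p"
    using assoc_mult_mat[OF A(1) B(1) mult_carrier_mat[OF B(2) A(2)]] e A(3) by simp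
  have e2: "A' * (A * B) = B" using assoc_mult_mat[OF A(2) A(1) B(1)] A(4) left_mult_one_mat[OF B(1)] by simp
  have 2: "B' * A' * (A * B) = 1\<^sub>m p"
    using assoc_mult_mat[OF B(2) A(2) mult_carrier_mat[OF A(1) B(1)]] e2 B(4) by simp
  show ?case unfolding invs_def using A B 1 2 by (intro CollectI conjI bexI[of _ "B' * A'"]) auto
next
  case (inv A)
  then obtain A' where A: "A \<in> carrier_mat p p" "A' \<in> carrier_mat p p" "A * A' = 1\<^sub>m p" "A' * A = 1\<^sub>m p"
    unfolding invs_def by auto
  have "minv A = A'" using minv_eq[OF A] .
  thus ?case unfolding invs_def using A by (intro CollectI conjI bexI[of _ A]) auto
qed

lemma shift_back: fixes p j b :: nat assumes "p > 0" "j < p" shows "((j + b) mod p + (p - b mod p)) mod p = j"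
proof -
  have e1: "(j + b) mod p = (j + b mod p) mod p" by (rule mod_add_right_eq[symmetric])
  have e2: "((j + b mod p) mod p + (p - b mod p)) mod p = (j + b mod p + (p - b mod p)) mod p"
    by (rule mod_add_left_eq)
  have e3: "j + b mod p + (p - b mod p) = j + p" using mod_less_divisor[OF assms(1), of b] by linarith
  show ?thesis unfolding e1 e2 e3 using assms(2) by simp
qed

lemma Mc_invs:
  assumes p: "p > 0" and f: "\<And>j. j < p \<Longrightarrow> f j \<noteq> 0"
  shows "Mc p f b \<in> invs p"
proof -
  define d where "d = p - b mod p"
  define g where "g j = 1 / f ((j + d) mod p)" for j
  have "(b + d) mod p = (b mod p + d) mod p" by (simp only: mod_add_left_eq)
  also have "b mod p + d = p" unfolding d_def using mod_less_divisor[OF p, of b] by linarith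
  finally have bd: "(b + d) mod p = 0 mod p" by simp
  have "Mc p f b * Mc p g d = Mc p (\<lambda>_. 1) 0" unfolding Mc_mult[OF p]
  proof (rule Mc_cong)
    fix j assume "j < p"
    have "(j + d) mod p < p" using p by simp
    hence "f ((j + d) mod p) \<noteq> 0" by (rule f)
    thus "f ((j + d) mod p) * g j = 1" unfolding g_def by simp
  qed (rule bd)
  moreover have "Mc p g d * Mc p f b = Mc p (\<lambda>_. 1) 0" unfolding Mc_mult[OF p]
  proof (rule Mc_cong)
    fix j assume j: "j < p"
    have "g ((j + b) mod p) = 1 / f j" unfolding g_def d_def using shift_back[OF p j] by simp
    thus "g ((j + b) mod p) * f j = 1" using f[OF j] by simp
  qed (use bd in \<open>simp add: add.commute\<close>)
  ultimately show ?thesis unfolding invs_def one_Mc[symmetric] by auto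
qed

lemma shift_inj: fixes p b :: nat assumes "p > 0" shows "inj_on (\<lambda>j. (j + b) mod p) {..<p}"
proof (rule inj_onI)
  fix x y assume "x \<in> {..<p}" "y \<in> {..<p}" "(x + b) mod p = (y + b) mod p"
  hence "[x + b = y + b] (mod p)" "x < p" "y < p" by (auto simp: cong_def)
  thus "x = y" by (metis cong_add_rcancel_nat cong_less_modulus_unique_nat)
qed

lemma shift_bij: fixes p b :: nat assumes "p > 0" shows "bij_betw (\<lambda>j. (j + b) mod p) {..<p} {..<p}"
proof -
  have "(\<lambda>j. (j + b) mod p) ` {..<p} \<subseteq> {..<p}" using assms by auto
  thus ?thesis unfolding bij_betw_def using endo_inj_surj[OF _ _ shift_inj[OF assms]] shift_inj[OF assms] by auto
qed

lemma prod_shift: fixes p b :: nat assumes "p > 0" shows "(\<Prod>j<p. f ((j + b) mod p)) = (\<Prod>j<p. f j)"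
  using prod.reindex_bij_betw[OF shift_bij[OF assms], of f] by simp

lemma mult_inj: fixes p b :: nat assumes "prime p" "coprime b p" shows "inj_on (\<lambda>k. (k * b) mod p) {..<p}"
proof (rule inj_onI)
  fix x y assume "x \<in> {..<p}" "y \<in> {..<p}" "(x * b) mod p = (y * b) mod p"
  hence "[x * b = y * b] (mod p)" "x < p" "y < p" by (auto simp: cong_def)
  thus "x = y" using assms(2) by (metis cong_mult_rcancel_nat cong_less_modulus_unique_nat)
qed

lemma mult_bij: fixes p b :: nat assumes "prime p" "coprime b p" shows "bij_betw (\<lambda>k. (k * b) mod p) {..<p} {..<p}"
proof -
  have "p > 0" using assms prime_gt_0_nat by auto
  hence "(\<lambda>k. (k * b) mod p) ` {..<p} \<subseteq> {..<p}" by auto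
  thus ?thesis unfolding bij_betw_def using endo_inj_surj[OF _ _ mult_inj[OF assms]] mult_inj[OF assms] by auto
qed

lemma coprime_small: fixes p b :: nat assumes "prime p" "0 < b" "b < p" shows "coprime b p"
proof -
  have "\<not> p dvd b" using assms(2,3) by (auto dest: dvd_imp_le)
  hence "coprime p b" using prime_imp_coprime[OF assms(1)] by blast
  thus ?thesis by (simp add: coprime_commute)
qed

lemma shift_const:
  fixes p b j :: nat
  assumes "prime p" "0 < b" "b < p" and r: "\<And>j. j < p \<Longrightarrow> r ((j + b) mod p) = r j" and "j < p"
  shows "r j = r 0"
proof -
  have p: "p > 0" using assms prime_gt_0_nat by auto
  have k: "r ((k * b) mod p) = r 0" for k
  proof (induction k)
    case (Suc k)
    have "Suc k * b = k * b + b" by simp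
    hence "(Suc k * b) mod p = ((k * b) mod p + b) mod p" using mod_add_left_eq[of "k * b" p b] by (simp only:)
    thus ?case using r[of "(k * b) mod p"] Suc p by simp
  qed simp
  have "j \<in> (\<lambda>k. (k * b) mod p) ` {..<p}"
    using mult_bij[OF assms(1) coprime_small[OF assms(1-3)]] assms(5) unfolding bij_betw_def by simp
  then obtain k where "j = (k * b) mod p" by blast
  thus ?thesis using k by simp
qed

lemma om_pow: fixes p k :: nat assumes "p > 0"
  shows "cis (2 * pi / p) ^ k = cis (2 * pi * real k / real p)"
  unfolding DeMoivre by (simp add: field_simps)

lemma om_p: fixes p :: nat assumes "p > 0" shows "cis (2 * pi / p) ^ p = 1"
  unfolding om_pow[OF assms] using assms by simp

lemma om_mod: fixes p n :: nat assumes "p > 0" shows "cis (2 * pi / p) ^ n = cis (2 * pi / p) ^ (n mod p)"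
proof -
  have "cis (2 * pi / p) ^ n = cis (2 * pi / p) ^ (p * (n div p) + n mod p)" by simp
  also have "\<dots> = (cis (2 * pi / p) ^ p) ^ (n div p) * cis (2 * pi / p) ^ (n mod p)"
    by (simp only: power_add power_mult)
  finally show ?thesis using om_p[OF assms] by simp
qed

lemma om_cong: fixes p n n' :: nat assumes "p > 0" "[n = n'] (mod p)"
  shows "cis (2 * pi / p) ^ n = cis (2 * pi / p) ^ n'"
  using om_mod[OF assms(1), of n] om_mod[OF assms(1), of n'] assms(2) by (simp add: cong_def)

lemma om_norm: "norm (cis x ^ k) = 1" by (simp add: norm_power)

lemma om_root: fixes p :: nat assumes "p > 0" "z ^ p = 1" shows "\<exists>a<p. z = cis (2 * pi / p) ^ a"
proof -
  have "z \<in> (\<lambda>k. cis (2 * pi * real k / real p)) ` {..<p}"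
    using bij_betw_roots_unity[OF assms(1)] assms(2) unfolding bij_betw_def by simp
  then obtain a where "a < p" "z = cis (2 * pi * real a / real p)" by auto
  thus ?thesis using om_pow[OF assms(1), of a] by auto
qed

lemma om_one: fixes p c :: nat assumes "p > 0" "c < p" "cis (2 * pi / p) ^ c = 1" shows "c = 0"
proof -
  have inj: "inj_on (\<lambda>k. cis (2 * pi * real k / real p)) {..<p}"
    using bij_betw_roots_unity[OF assms(1)] unfolding bij_betw_def by simp
  have "cis (2 * pi * real c / real p) = cis (2 * pi * real 0 / real p)"
    using assms(3) om_pow[OF assms(1), of c] by simp
  thus ?thesis using inj_onD[OF inj _ _] assms by auto
qed

lemma two_sum: "2 * (\<Sum>q<n. q) = n * (n - 1::nat)"
proof (induction n)
  case (Suc n) thus ?case by (cases n) (auto simp: algebra_simps)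
qed simp

lemma sum_dvd: fixes p :: nat assumes "odd p" shows "p dvd (\<Sum>q<p. q)"
proof -
  obtain t where t: "p - 1 = 2 * t" using assms by (metis odd_two_times_div_two_nat dvd_minus_self even_diff_nat odd_one dvd_mult_div_cancel)
  have "2 * (\<Sum>q<p. q) = 2 * (p * t)" using two_sum[of p] t by simp
  hence "(\<Sum>q<p. q) = p * t" by simp
  thus ?thesis by simp
qed

lemma om_prod: fixes p c :: nat assumes "p > 0" "odd p"
  shows "(\<Prod>q<p. cis (2 * pi / p) ^ (c * q)) = 1"
proof -
  have "(\<Prod>q<p. cis (2 * pi / p) ^ (c * q)) = cis (2 * pi / p) ^ (\<Sum>q<p. c * q)"
    by (simp add: power_sum)
  also have "(\<Sum>q<p. c * q) = c * (\<Sum>q<p. q)" by (simp add: sum_distrib_left)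
  also obtain t where "(\<Sum>q<p. q) = p * t" using sum_dvd[OF assms(2)] by blast
  also have "cis (2 * pi / p) ^ (c * (p * t)) = 1"
    by (metis om_p[OF assms(1)] power_mult mult.commute power_one)
  finally show ?thesis .
qed

lemma Tgrp_props: assumes "Sdiag p \<xi> \<in> Tgrp p"
  shows "\<forall>q<p. cmod (\<xi> q) = 1" "(\<Prod>q<p. \<xi> q) = 1"
proof -
  obtain \<xi>0 where e: "Sdiag p \<xi> = Sdiag p \<xi>0" and h: "\<forall>q<p. cmod (\<xi>0 q) = 1" "(\<Prod>q<p. \<xi>0 q) = 1"
    using assms unfolding Tgrp_def by auto
  have eq: "\<xi> q = \<xi>0 q" if "q < p" for q using Mc_eqD[OF e[unfolded Sdiag_Mc] that] .
  show "\<forall>q<p. cmod (\<xi> q) = 1" using h eq by auto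
  show "(\<Prod>q<p. \<xi> q) = 1" using h eq by (metis lessThan_iff prod.cong)
qed

lemma Mc_pow0: "Mc p h 0 ^\<^sub>m n = Mc p (\<lambda>j. h j ^ n) 0"
proof (induction n)
  case 0 show ?case by (simp add: one_Mc)
next
  case (Suc n)
  show ?case
  proof (cases "p = 0")
    case True thus ?thesis unfolding Mc_def by (intro eq_matI) auto
  next
    case False
    hence p: "p > 0" by simp
    have "Mc p h 0 ^\<^sub>m Suc n = Mc p (\<lambda>j. h j ^ n) 0 * Mc p h 0" using Suc by simp
    also have "\<dots> = Mc p (\<lambda>j. h ((j + 0) mod p) ^ n * h j) (0 + 0)" by (rule Mc_mult[OF p])
    also have "\<dots> = Mc p (\<lambda>j. h j ^ Suc n) 0" by (rule Mc_cong) (auto simp: mult.commute)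
    finally show ?thesis .
  qed
qed

lemma Mc_pow: fixes p b :: nat assumes p: "p > 0" and h: "\<And>j. j < p \<Longrightarrow> h j \<noteq> 0"
  shows "\<exists>g. Mc p h b ^\<^sub>m n = Mc p g (b * n) \<and> (\<forall>j<p. g j \<noteq> 0) \<and> (\<Prod>j<p. g j) = (\<Prod>j<p. h j) ^ n"
proof (induction n)
  case 0 show ?case by (intro exI[of _ "\<lambda>_. 1"]) (simp add: one_Mc)
next
  case (Suc n)
  then obtain g where g: "Mc p h b ^\<^sub>m n = Mc p g (b * n)" "\<forall>j<p. g j \<noteq> 0" "(\<Prod>j<p. g j) = (\<Prod>j<p. h j) ^ n"
    by blast
  define g' where "g' = (\<lambda>j. g ((j + b) mod p) * h j)"
  have "Mc p h b ^\<^sub>m Suc n = Mc p g' (b * n + b)" using g(1) p by (simp add: Mc_mult g'_def)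
  also have "b * n + b = b * Suc n" by simp
  finally have 1: "Mc p h b ^\<^sub>m Suc n = Mc p g' (b * Suc n)" .
  have 2: "\<forall>j<p. g' j \<noteq> 0" using g(2) h p unfolding g'_def by simp
  have "(\<Prod>j<p. g' j) = (\<Prod>j<p. g ((j + b) mod p)) * (\<Prod>j<p. h j)" unfolding g'_def by (rule prod.distrib)
  also have "\<dots> = (\<Prod>j<p. h j) ^ Suc n" using prod_shift[OF p, of g b] g(3) by simp
  finally show ?case using 1 2 by blast
qed

lemma pow_comm: fixes A :: "complex mat" assumes A: "A \<in> carrier_mat n n" shows "A * A ^\<^sub>m k = A ^\<^sub>m k * A"
proof (induction k)
  case 0 thus ?case using A by simp
next
  case (Suc k)
  have "A * A ^\<^sub>m Suc k = A * (A ^\<^sub>m k * A)" by simp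
  also have "\<dots> = (A * A ^\<^sub>m k) * A" using assoc_mult_mat[OF A pow_carrier_mat[OF A] A] by simp
  also have "\<dots> = A ^\<^sub>m Suc k * A" using Suc by simp
  finally show ?case .
qed

lemma comm_rel:
  fixes A A' B B' :: "complex mat"
  assumes A: "A \<in> carrier_mat n n" "A' \<in> carrier_mat n n" "A * A' = 1\<^sub>m n" "A' * A = 1\<^sub>m n"
    and B: "B \<in> carrier_mat n n" "B' \<in> carrier_mat n n" "B * B' = 1\<^sub>m n" "B' * B = 1\<^sub>m n"
    and h: "A * B * A' * B' = z \<cdot>\<^sub>m 1\<^sub>m n"
  shows "A * B = z \<cdot>\<^sub>m (B * A)"
proof -
  have AB: "A * B \<in> carrier_mat n n" using A B by simp
  have ABA: "A * B * A' \<in> carrier_mat n n" using A B by simp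
  have "A * B * A' * B' * (B * A) = A * B * A' * (B' * (B * A))"
    using assoc_mult_mat[OF ABA B(2) mult_carrier_mat[OF B(1) A(1)]] .
  also have "B' * (B * A) = A" using assoc_mult_mat[OF B(2) B(1) A(1), symmetric] B(4) left_mult_one_mat[OF A(1)] by simp
  also have "A * B * A' * A = A * B" using assoc_mult_mat[OF AB A(2) A(1)] A(4) right_mult_one_mat[OF AB] by simp
  finally have "A * B = (z \<cdot>\<^sub>m 1\<^sub>m n) * (B * A)" using h by simp
  also have "\<dots> = z \<cdot>\<^sub>m (B * A)" using mult_smult_assoc_mat[OF one_carrier_mat mult_carrier_mat[OF B(1) A(1)]] A B by simp
  finally show ?thesis .
qed


theorem lemma3:
  fixes p m b b' c :: nat and \<xi> \<xi>' :: "nat \<Rightarrow> complex"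
  defines "\<omega> \<equiv> cis (2 * pi / p)"
  defines "Q \<equiv> Tpow p m"
  defines "K \<equiv> KQ p Q"
  defines "M \<equiv> Sdiag p \<xi> * Xsh p ^\<^sub>m b"
  defines "M' \<equiv> Sdiag p \<xi>' * Xsh p ^\<^sub>m b'"
  assumes "prime p" and "odd p" and "m \<ge> 1"
    and "Sdiag p \<xi> \<in> Q" and "Sdiag p \<xi>' \<in> Q"
    and "b < p" and "b' < p" and "c < p"
    and "M \<in> K" and "M' \<in> K"
    and "comm M M' = (\<omega> ^ c) \<cdot>\<^sub>m 1\<^sub>m p"
  shows "(b = 0 \<and> b' = 0 \<longrightarrow> M \<in> Q \<and> M' \<in> Q \<and> c = 0)
    \<and> (b \<noteq> 0 \<and> b' = 0 \<longrightarrow> M' \<in> Tpow p 1 \<and> (c = 0 \<longrightarrow> M' \<in> center K))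
    \<and> (b \<noteq> 0 \<and> b' \<noteq> 0 \<longrightarrow>
        (\<exists>a y c'. a < p \<and> y < p \<and> c' < p
          \<and> (b' * c' + c) mod p = 0 \<and> (y * b) mod p = b'
          \<and> Sdiag p (\<lambda>q. \<omega> ^ (c' * q)) \<in> Tpow p 1
          \<and> (\<omega> ^ a) \<cdot>\<^sub>m M' = (M * Sdiag p (\<lambda>q. \<omega> ^ (c' * q))) ^\<^sub>m y
          \<and> (c = 0 \<longrightarrow> (\<omega> ^ a) \<cdot>\<^sub>m M' = M ^\<^sub>m y)))"
proof -
  have prime: "prime p" and oddp: "odd p" and xiQ: "Sdiag p \<xi> \<in> Q" and xi'Q: "Sdiag p \<xi>' \<in> Q"
    and bp: "b < p" and b'p: "b' < p" and cp: "c < p" and M'K: "M' \<in> K"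
    and hc: "comm M M' = (\<omega> ^ c) \<cdot>\<^sub>m 1\<^sub>m p" using assms(6-16) by auto
  have p: "p > 0" using prime prime_gt_0_nat by blast
  have QT: "Q \<subseteq> Tgrp p" unfolding Q_def Tpow_def by auto
  have xi: "\<forall>q<p. cmod (\<xi> q) = 1" "(\<Prod>q<p. \<xi> q) = 1" using Tgrp_props xiQ QT by blast+
  have xi': "\<forall>q<p. cmod (\<xi>' q) = 1" "(\<Prod>q<p. \<xi>' q) = 1" using Tgrp_props xi'Q QT by blast+
  have om0: "\<omega> \<noteq> 0" unfolding \<omega>_def by simp
  have omn: "\<omega> ^ k \<noteq> 0" for k using om0 by simp
  have omp: "\<omega> ^ p = 1" unfolding \<omega>_def by (rule om_p[OF p])
  have omc: "[n = n'] (mod p) \<Longrightarrow> \<omega> ^ n = \<omega> ^ n'" for n n' unfolding \<omega>_def by (rule om_cong[OF p])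
  define f where "f = (\<lambda>j. \<xi> ((j + b) mod p))"
  define f' where "f' = (\<lambda>j. \<xi>' ((j + b') mod p))"
  have M: "M = Mc p f b" unfolding M_def f_def by (rule SX_Mc[OF p])
  have M': "M' = Mc p f' b'" unfolding M'_def f'_def by (rule SX_Mc[OF p])
  have fnz: "f j \<noteq> 0" if "j < p" for j
  proof -
    have "(j + b) mod p < p" using p by simp
    thus ?thesis using xi(1) unfolding f_def by (metis norm_zero zero_neq_one)
  qed
  have f'nz: "f' j \<noteq> 0" if "j < p" for j
  proof -
    have "(j + b') mod p < p" using p by simp
    thus ?thesis using xi'(1) unfolding f'_def by (metis norm_zero zero_neq_one)
  qed
  have fprod: "(\<Prod>j<p. f j) = 1" unfolding f_def using prod_shift[OF p, of \<xi> b] xi(2) by simp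
  have f'prod: "(\<Prod>j<p. f' j) = 1" unfolding f'_def using prod_shift[OF p, of \<xi>' b'] xi'(2) by simp
  obtain Mi where Mi: "Mi \<in> carrier_mat p p" "M * Mi = 1\<^sub>m p" "Mi * M = 1\<^sub>m p"
    using Mc_invs[of p f b, OF p fnz] unfolding M invs_def by auto
  obtain Mi' where Mi': "Mi' \<in> carrier_mat p p" "M' * Mi' = 1\<^sub>m p" "Mi' * M' = 1\<^sub>m p"
    using Mc_invs[of p f' b', OF p f'nz] unfolding M' invs_def by auto
  have Mc: "M \<in> carrier_mat p p" "M' \<in> carrier_mat p p" unfolding M M' by simp_all
  have "minv M = Mi" by (rule minv_eq[OF Mc(1) Mi])
  moreover have "minv M' = Mi'" by (rule minv_eq[OF Mc(2) Mi'])
  ultimately have "M * M' * Mi * Mi' = (\<omega> ^ c) \<cdot>\<^sub>m 1\<^sub>m p" using hc unfolding comm_def by simp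
  hence rel: "M * M' = (\<omega> ^ c) \<cdot>\<^sub>m (M' * M)" by (rule comm_rel[OF Mc(1) Mi(1) Mi(2,3) Mc(2) Mi'(1) Mi'(2,3)])
  have star: "f ((j + b') mod p) * f' j = \<omega> ^ c * (f' ((j + b) mod p) * f j)" if "j < p" for j
  proof -
    have "Mc p (\<lambda>j. f ((j + b') mod p) * f' j) (b + b') = Mc p (\<lambda>j. \<omega> ^ c * (f' ((j + b) mod p) * f j)) (b + b')"
      using rel unfolding M M' Mc_mult[OF p] Mc_smult by (simp add: add.commute)
    from Mc_eqD[OF this that] show ?thesis .
  qed
  have Kinv: "K \<subseteq> invs p"
  proof
    fix B assume "B \<in> K"
    hence B: "B \<in> gen_grp p {S * (Xsh p ^\<^sub>m d) | S d. S \<in> Q \<and> d < p}" unfolding K_def KQ_def .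
    have "{S * (Xsh p ^\<^sub>m d) | S d. S \<in> Q \<and> d < p} \<subseteq> invs p"
    proof safe
      fix S d assume "S \<in> Q" "d < p"
      then obtain \<xi>0 where S: "S = Sdiag p \<xi>0" using QT unfolding Tgrp_def by auto
      have "\<forall>q<p. cmod (\<xi>0 q) = 1" using Tgrp_props(1)[of p \<xi>0] S \<open>S \<in> Q\<close> QT by auto
      hence nz: "\<xi>0 ((j + d) mod p) \<noteq> 0" if "j < p" for j
        using p by (metis mod_less_divisor norm_zero zero_neq_one)
      show "S * Xsh p ^\<^sub>m d \<in> invs p" unfolding S SX_Mc[OF p] by (rule Mc_invs[OF p nz])
    qed
    thus "B \<in> invs p" using gen_grp_invs[OF B] by blast
  qed
  have P1: "b = 0 \<and> b' = 0 \<longrightarrow> M \<in> Q \<and> M' \<in> Q \<and> c = 0"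
  proof
    assume "b = 0 \<and> b' = 0"
    hence b0: "b = 0" "b' = 0" by auto
    have MS: "M = Sdiag p \<xi>" "M' = Sdiag p \<xi>'" unfolding M_def M'_def b0 by (simp_all add: Xsh_def Sdiag_def)
    have "f 0 * f' 0 = \<omega> ^ c * (f' 0 * f 0)" using star[OF p] b0 by simp
    hence "\<omega> ^ c = 1" using fnz[OF p] f'nz[OF p] by simp
    hence "c = 0" using om_one[OF p cp] unfolding \<omega>_def by simp
    thus "M \<in> Q \<and> M' \<in> Q \<and> c = 0" using MS xiQ xi'Q by simp
  qed
  have P2: "b \<noteq> 0 \<and> b' = 0 \<longrightarrow> M' \<in> Tpow p 1 \<and> (c = 0 \<longrightarrow> M' \<in> center K)"
  proof
    assume "b \<noteq> 0 \<and> b' = 0"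
    hence b0: "b \<noteq> 0" "b' = 0" by auto
    have MS: "M' = Sdiag p \<xi>'" unfolding M'_def b0 by (simp add: Xsh_def Sdiag_def)
    have rec: "\<xi>' j = \<omega> ^ c * \<xi>' ((j + b) mod p)" if j: "j < p" for j
    proof -
      have "f j * \<xi>' j = \<omega> ^ c * (\<xi>' ((j + b) mod p) * f j)"
        using star[OF j] j b0 unfolding f'_def by simp
      thus ?thesis using fnz[OF j] by (simp add: field_simps)
    qed
    define a where "a = (\<lambda>k. \<xi>' ((k * b) mod p))"
    have a_suc: "a k = \<omega> ^ c * a (Suc k)" for k
    proof -
      have "Suc k * b = k * b + b" by simp
      hence e: "(Suc k * b) mod p = ((k * b) mod p + b) mod p" using mod_add_left_eq[of "k * b" p b] by (simp only:)
      show ?thesis unfolding a_def e using rec[of "(k * b) mod p"] p by simp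
    qed
    have a0: "\<xi>' 0 = \<omega> ^ (c * k) * a k" for k
    proof (induction k)
      case 0 thus ?case unfolding a_def by simp
    next
      case (Suc k)
      have e: "\<omega> ^ (c * Suc k) * a (Suc k) = \<omega> ^ (c * k) * (\<omega> ^ c * a (Suc k))"
        by (simp add: power_add mult_ac)
      show ?case using Suc.IH a_suc[of k] e by metis
    qed
    have b0': "0 < b" using b0 by simp
    have bij: "bij_betw (\<lambda>k. (k * b) mod p) {..<p} {..<p}"
      by (rule mult_bij[OF prime coprime_small[OF prime b0' bp]])
    have aprod: "(\<Prod>k<p. a k) = 1" unfolding a_def
      using prod.reindex_bij_betw[OF bij, of \<xi>'] xi'(2) by simp
    have "\<xi>' 0 ^ p = (\<Prod>k<p. \<xi>' 0)" by simp
    also have "\<dots> = (\<Prod>k<p. \<omega> ^ (c * k) * a k)" using a0 by simp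
    also have "\<dots> = (\<Prod>k<p. \<omega> ^ (c * k)) * (\<Prod>k<p. a k)" by (rule prod.distrib)
    also have "\<dots> = 1" using aprod om_prod[OF p oddp, of c] unfolding \<omega>_def by simp
    finally have x0p: "\<xi>' 0 ^ p = 1" .
    have xjp: "\<xi>' j ^ p = 1" if j: "j < p" for j
    proof -
      have "j \<in> (\<lambda>k. (k * b) mod p) ` {..<p}" using bij j unfolding bij_betw_def by simp
      then obtain k where k: "j = (k * b) mod p" by blast
      have "1 = (\<omega> ^ (c * k) * a k) ^ p" using x0p a0[of k] by simp
      also have "\<dots> = (\<omega> ^ p) ^ (c * k) * a k ^ p" by (simp add: power_mult_distrib flip: power_mult) (simp add: mult.commute)
      also have "\<dots> = \<xi>' j ^ p" using omp k unfolding a_def by simp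
      finally show ?thesis by simp
    qed
    have M'T: "M' \<in> Tgrp p" using MS xi'Q QT by auto
    have "M' ^\<^sub>m p = Mc p (\<lambda>j. \<xi>' j ^ p) 0" unfolding MS Sdiag_Mc Mc_pow0 ..
    also have "\<dots> = 1\<^sub>m p" unfolding one_Mc by (rule Mc_cong) (use xjp in auto)
    finally have T1: "M' \<in> Tpow p 1" using M'T unfolding Tpow_def by simp
    moreover have "c = 0 \<longrightarrow> M' \<in> center K"
    proof
      assume c0: "c = 0"
      have xc: "\<xi>' j = \<xi>' 0" if "j < p" for j
      proof (rule shift_const[OF prime b0' bp _ that])
        fix j assume j: "j < p"
        have "\<xi>' j = \<omega> ^ 0 * \<xi>' ((j + b) mod p)" using rec[OF j] c0 by (simp only:)
        thus "\<xi>' ((j + b) mod p) = \<xi>' j" by simp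
      qed
      have "M' = \<xi>' 0 \<cdot>\<^sub>m 1\<^sub>m p" unfolding MS Sdiag_Mc one_Mc Mc_smult
      proof (rule Mc_cong)
        fix j assume "j < p"
        thus "\<xi>' j = \<xi>' 0 * 1" using xc[of j] by simp
      qed simp
      moreover have "\<forall>B\<in>K. (\<xi>' 0 \<cdot>\<^sub>m 1\<^sub>m p) * B = B * (\<xi>' 0 \<cdot>\<^sub>m 1\<^sub>m p)"
      proof
        fix B assume "B \<in> K"
        hence B: "B \<in> carrier_mat p p" using Kinv unfolding invs_def by auto
        have "(\<xi>' 0 \<cdot>\<^sub>m 1\<^sub>m p) * B = \<xi>' 0 \<cdot>\<^sub>m B"
          using mult_smult_assoc_mat[OF one_carrier_mat B] left_mult_one_mat[OF B] by simp
        moreover have "B * (\<xi>' 0 \<cdot>\<^sub>m 1\<^sub>m p) = \<xi>' 0 \<cdot>\<^sub>m B"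
          using mult_smult_distrib[OF B one_carrier_mat] right_mult_one_mat[OF B] by simp
        ultimately show "(\<xi>' 0 \<cdot>\<^sub>m 1\<^sub>m p) * B = B * (\<xi>' 0 \<cdot>\<^sub>m 1\<^sub>m p)" by simp
      qed
      ultimately show "M' \<in> center K" using M'K unfolding center_def by simp
    qed
    ultimately show "M' \<in> Tpow p 1 \<and> (c = 0 \<longrightarrow> M' \<in> center K)" by blast
  qed
  have P3: "b \<noteq> 0 \<and> b' \<noteq> 0 \<longrightarrow>
        (\<exists>a y c'. a < p \<and> y < p \<and> c' < p
          \<and> (b' * c' + c) mod p = 0 \<and> (y * b) mod p = b'
          \<and> Sdiag p (\<lambda>q. \<omega> ^ (c' * q)) \<in> Tpow p 1
          \<and> (\<omega> ^ a) \<cdot>\<^sub>m M' = (M * Sdiag p (\<lambda>q. \<omega> ^ (c' * q))) ^\<^sub>m y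
          \<and> (c = 0 \<longrightarrow> (\<omega> ^ a) \<cdot>\<^sub>m M' = M ^\<^sub>m y))"
  proof
    assume "b \<noteq> 0 \<and> b' \<noteq> 0"
    hence b0: "0 < b" "0 < b'" by auto
    have cop: "coprime b p" "coprime b' p" using coprime_small[OF prime b0(1) bp] coprime_small[OF prime b0(2) b'p] by blast+
    obtain u where u: "[b' * u = Suc 0] (mod p)" using cong_solve_coprime_nat[OF cop(2)] by blast
    obtain v where v: "[b * v = Suc 0] (mod p)" using cong_solve_coprime_nat[OF cop(1)] by blast
    define c' where "c' = (u * (p - c)) mod p"
    define y where "y = (v * b') mod p"
    have c'p: "c' < p" and yp: "y < p" unfolding c'_def y_def using p by auto
    have hc': "[b' * c' + c = 0] (mod p)"
    proof -
      have "[b' * c' = b' * (u * (p - c))] (mod p)" unfolding c'_def by (rule cong_scalar_left) simp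
      also have "b' * (u * (p - c)) = (b' * u) * (p - c)" by (simp add: mult.assoc)
      also have "[(b' * u) * (p - c) = Suc 0 * (p - c)] (mod p)" by (rule cong_scalar_right[OF u])
      finally have "[b' * c' + c = Suc 0 * (p - c) + c] (mod p)" by (rule cong_add) simp
      also have "Suc 0 * (p - c) + c = p" using cp by simp
      finally show ?thesis by (simp add: cong_def)
    qed
    hence hc'm: "(b' * c' + c) mod p = 0" by (simp add: cong_def)
    have hy: "[y * b = b'] (mod p)"
    proof -
      have "[y * b = (v * b') * b] (mod p)" unfolding y_def by (rule cong_scalar_right) simp
      also have "(v * b') * b = (b * v) * b'" by (simp add: mult_ac)
      also have "[(b * v) * b' = Suc 0 * b'] (mod p)" by (rule cong_scalar_right[OF v])
      finally show ?thesis by simp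
    qed
    hence hym: "(y * b) mod p = b'" using b'p by (simp add: cong_def)
    define \<chi> where "\<chi> = (\<lambda>q. \<omega> ^ (c' * q))"
    have chiT: "Sdiag p \<chi> \<in> Tpow p 1"
    proof -
      have "Sdiag p \<chi> \<in> Tgrp p" unfolding Tgrp_def
        using om_prod[OF p oddp, of c'] by (auto simp: \<chi>_def \<omega>_def om_norm)
      moreover have "Sdiag p \<chi> ^\<^sub>m p = 1\<^sub>m p" unfolding Sdiag_Mc Mc_pow0 one_Mc
      proof (rule Mc_cong)
        fix j have "\<chi> j ^ p = (\<omega> ^ p) ^ (c' * j)" unfolding \<chi>_def by (simp flip: power_mult add: mult.commute)
        thus "\<chi> j ^ p = 1" using omp by simp
      qed simp
      ultimately show ?thesis unfolding Tpow_def by simp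
    qed
    define h where "h = (\<lambda>j. f j * \<chi> j)"
    have N: "M * Sdiag p \<chi> = Mc p h b" unfolding M Sdiag_Mc Mc_mult[OF p] h_def
      by (rule Mc_cong) auto
    have hnz: "h j \<noteq> 0" if "j < p" for j unfolding h_def \<chi>_def using fnz[OF that] om0 by simp
    have hprod: "(\<Prod>j<p. h j) = 1" unfolding h_def prod.distrib fprod
      using om_prod[OF p oddp, of c'] unfolding \<chi>_def \<omega>_def by simp
    have NM': "Mc p h b * Mc p f' b' = Mc p f' b' * Mc p h b"
      unfolding Mc_mult[OF p]
    proof (rule Mc_cong)
      fix j assume j: "j < p"
      have cg: "[c + c' * ((j + b') mod p) = c' * j] (mod p)"
      proof -
        have "[c + c' * ((j + b') mod p) = c + c' * (j + b')] (mod p)"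
          by (intro cong_add cong_scalar_left) simp_all
        also have "c + c' * (j + b') = c' * j + (b' * c' + c)" by (simp add: algebra_simps)
        also have "[c' * j + (b' * c' + c) = c' * j + 0] (mod p)" by (intro cong_add hc') simp
        finally show ?thesis by simp
      qed
      have E: "\<omega> ^ c * \<chi> ((j + b') mod p) = \<chi> j"
        unfolding \<chi>_def power_add[symmetric] using omc[OF cg] .
      have "h ((j + b') mod p) * f' j = (f ((j + b') mod p) * f' j) * \<chi> ((j + b') mod p)"
        unfolding h_def by (simp only: mult_ac)
      also have "\<dots> = \<omega> ^ c * (f' ((j + b) mod p) * f j) * \<chi> ((j + b') mod p)" by (simp only: star[OF j])
      also have "\<dots> = f' ((j + b) mod p) * f j * (\<omega> ^ c * \<chi> ((j + b') mod p))" by (simp only: mult_ac)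
      also have "\<dots> = f' ((j + b) mod p) * h j" unfolding E h_def by (simp only: mult_ac)
      finally show "h ((j + b') mod p) * f' j = f' ((j + b) mod p) * h j" .
    qed (simp add: add.commute)
    obtain g where g: "Mc p h b ^\<^sub>m y = Mc p g (b * y)" "\<forall>j<p. g j \<noteq> 0" "(\<Prod>j<p. g j) = (\<Prod>j<p. h j) ^ y"
      using Mc_pow[where h=h and b=b and n=y, OF p hnz] by blast
    have Ny: "Mc p h b ^\<^sub>m y = Mc p g b'" unfolding g(1) using hym by (intro Mc_cong) (auto simp: mult.commute)
    have gprod: "(\<Prod>j<p. g j) = 1" using g(3) hprod by simp
    have NG: "Mc p h b * Mc p g b' = Mc p g b' * Mc p h b" using pow_comm[OF Mc_carrier, of p h b y] Ny by simp
    have e1: "h ((j + b') mod p) * f' j = f' ((j + b) mod p) * h j" if "j < p" for j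
      using Mc_eqD[OF NM'[unfolded Mc_mult[OF p] add.commute[of b' b]] that] .
    have e2: "h ((j + b') mod p) * g j = g ((j + b) mod p) * h j" if "j < p" for j
      using Mc_eqD[OF NG[unfolded Mc_mult[OF p] add.commute[of b' b]] that] .
    define r where "r = (\<lambda>j. f' j / g j)"
    have rsh: "r ((j + b) mod p) = r j" if j: "j < p" for j
    proof -
      define X where "X = (j + b) mod p"
      define Y where "Y = (j + b') mod p"
      have X: "X < p" unfolding X_def using p by simp
      have F: "f' X * h j = h Y * f' j" using e1[OF j] unfolding X_def Y_def by simp
      have G: "g X * h j = h Y * g j" using e2[OF j] unfolding X_def Y_def by simp
      have "f' X * g j * h j = (f' X * h j) * g j" by (simp only: mult_ac)
      also have "\<dots> = (h Y * f' j) * g j" by (simp only: F)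
      also have "\<dots> = f' j * (h Y * g j)" by (simp only: mult_ac)
      also have "\<dots> = f' j * (g X * h j)" by (simp only: G)
      also have "\<dots> = f' j * g X * h j" by (simp only: mult_ac)
      finally have "f' X * g j = f' j * g X" using hnz[OF j] by simp
      moreover have "g X \<noteq> 0" "g j \<noteq> 0" using g(2) X j by auto
      ultimately show ?thesis unfolding r_def X_def[symmetric] by (simp add: frac_eq_eq)
    qed
    define lam where "lam = r 0"
    have f'g: "f' j = lam * g j" if j: "j < p" for j
    proof -
      have "r j = r 0" by (rule shift_const[OF prime b0(1) bp _ j]) (use rsh in simp)
      thus ?thesis unfolding lam_def r_def using g(2) j by (simp add: field_simps)
    qed
    have "1 = (\<Prod>j<p. f' j)" using f'prod by simp
    also have "\<dots> = (\<Prod>j<p. lam * g j)" using f'g by simp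
    also have "\<dots> = lam ^ p" unfolding prod.distrib gprod by simp
    finally have lp: "lam ^ p = 1" by simp
    have lnz: "lam \<noteq> 0"
    proof
      assume "lam = 0" thus False using lp p by (simp add: zero_power)
    qed
    have "(1 / lam) ^ p = 1" using lp by (simp add: power_one_over)
    then obtain a where a: "a < p" "1 / lam = \<omega> ^ a" using om_root[OF p] unfolding \<omega>_def by blast
    have main: "(\<omega> ^ a) \<cdot>\<^sub>m M' = (M * Sdiag p \<chi>) ^\<^sub>m y"
      unfolding N Ny M' Mc_smult
    proof (rule Mc_cong)
      fix j assume "j < p"
      thus "\<omega> ^ a * f' j = g j" unfolding a(2)[symmetric] f'g[OF \<open>j < p\<close>] using lnz by simp
    qed simp
    have c0: "c = 0 \<longrightarrow> (\<omega> ^ a) \<cdot>\<^sub>m M' = M ^\<^sub>m y"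
    proof
      assume "c = 0"
      hence "p dvd b' * c'" using hc'm by (simp add: dvd_eq_mod_eq_0)
      moreover have "\<not> p dvd b'" using b0 b'p by (auto dest: dvd_imp_le)
      ultimately have "p dvd c'" using prime prime_dvd_mult_iff by blast
      hence "c' = 0" using c'p by (auto dest: dvd_imp_le)
      hence "Sdiag p \<chi> = 1\<^sub>m p" unfolding \<chi>_def Sdiag_Mc one_Mc by simp
      thus "(\<omega> ^ a) \<cdot>\<^sub>m M' = M ^\<^sub>m y" using main right_mult_one_mat[OF Mc(1)] by simp
    qed
    show "\<exists>a y c'. a < p \<and> y < p \<and> c' < p
          \<and> (b' * c' + c) mod p = 0 \<and> (y * b) mod p = b'
          \<and> Sdiag p (\<lambda>q. \<omega> ^ (c' * q)) \<in> Tpow p 1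
          \<and> (\<omega> ^ a) \<cdot>\<^sub>m M' = (M * Sdiag p (\<lambda>q. \<omega> ^ (c' * q))) ^\<^sub>m y
          \<and> (c = 0 \<longrightarrow> (\<omega> ^ a) \<cdot>\<^sub>m M' = M ^\<^sub>m y)"
    proof (rule exI[of _ a], rule exI[of _ y], rule exI[of _ c'], intro conjI)
    qed (fact a(1) yp c'p hc'm hym chiT[unfolded \<chi>_def] main[unfolded \<chi>_def] c0)+
  qed
  show ?thesis by (intro conjI P1 P2 P3)
qed

end
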